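(* The generating function $$F_{(231,312)}(x,p,q,u,v,s,t)=\sum_{n\ge0}\ \sum_{\pi\in S_n(231,312)} x^n p^{\operatorname{asc}(\pi)}q^{\operatorname{des}(\pi)}u^{\operatorname{lrmax}(\pi)}v^{\operatorname{rlmax}(\pi)}s^{\operatorname{lrmin}(\pi)}t^{\operatorname{rlmin}(\pi)}$$ is equal to $\dfrac{A}{(1-qsx)(1-qx-ptux)(1-qvx)(1-qsvx)}$, where $$\begin{aligned}A={}&1 - p t u x + s t u v x + q^4 s^2 v^2 x^4 + q^3 s v x^3 \bigl(-1 - v + s (-1 + v (-1 + (-1 + p) t u x))\bigr)\\ &- q x \bigl(1 + v - p t u v x + s^2 t u v x (1 + p t u (-1 + v) x) + s (1 + v - p t u x - (-1 + p) t u v x + p t^2 u^2 v x^2 + t u v^2 x (1 - p t u x))\bigr)\\ &+ q^2 x^2 \bigl(v + s^2 v (1 + t u (1 - p + v) x) + s (1 + v^2 (1 - (-1 + p) t u x) + v (2 - p t u x))\bigr).\end{aligned}$$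
   Context: For $n\ge 0$, $S_n$ denotes the set of permutations $\pi=\pi_1\cdots\pi_n$ of $[n]=\{1,\dots,n\}$ ($S_0$ consists of the empty permutation, for which all statistics are $0$). $\pi$ avoids a pattern $\tau\in S_k$ if no subsequence $\pi_{i_1}\cdots\pi_{i_k}$ ($i_1<\dots<i_k$) satisfies $\pi_{i_a}<\pi_{i_b}\iff\tau_a<\tau_b$; $S_n(\tau,\rho)$ is the set of permutations in $S_n$ avoiding both $\tau$ and $\rho$. $\operatorname{asc}(\pi)$ (resp. $\operatorname{des}(\pi)$) is the number of $i\in[n-1]$ with $\pi_i<\pi_{i+1}$ (resp. $\pi_i>\pi_{i+1}$). $\pi_i$ is a left-to-right maximum (resp. minimum) if it is larger (resp. smaller) than every $\pi_j$ with $j<i$, and a right-to-left maximum (resp. minimum) if it is larger (resp. smaller) than every $\pi_j$ with $j>i$; $\operatorname{lrmax},\operatorname{lrmin},\operatorname{rlmax},\operatorname{rlmin}$ count these. *)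

theory Defs
  imports "HOL-Computational_Algebra.Formal_Power_Series"
begin

text \<open>Permutations of [n] are represented as lists pi_1 ... pi_n (0-indexed positions).\<close>
definition perms :: "nat \<Rightarrow> nat list set" where
  "perms n = {xs. length xs = n \<and> distinct xs \<and> set xs = {1..n}}"

definition contains :: "nat list \<Rightarrow> nat list \<Rightarrow> bool" where
  "contains xs tau \<longleftrightarrow> (\<exists>idx :: nat list. length idx = length tau \<and> sorted_wrt (<) idx
     \<and> (\<forall>i<length idx. idx ! i < length xs)
     \<and> (\<forall>a<length tau. \<forall>b<length tau. xs ! (idx ! a) < xs ! (idx ! b) \<longleftrightarrow> tau ! a < tau ! b))"

definition avoids :: "nat list \<Rightarrow> nat list \<Rightarrow> bool" where
  "avoids xs tau \<longleftrightarrow> \<not> contains xs tau"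

definition avoiders :: "nat list \<Rightarrow> nat list \<Rightarrow> nat \<Rightarrow> nat list set" where
  "avoiders tau rho n = {xs \<in> perms n. avoids xs tau \<and> avoids xs rho}"

definition asc :: "nat list \<Rightarrow> nat" where
  "asc xs = card {i. Suc i < length xs \<and> xs ! i < xs ! Suc i}"

definition des :: "nat list \<Rightarrow> nat" where
  "des xs = card {i. Suc i < length xs \<and> xs ! i > xs ! Suc i}"

definition lrmax :: "nat list \<Rightarrow> nat" where
  "lrmax xs = card {i. i < length xs \<and> (\<forall>j<i. xs ! j < xs ! i)}"

definition lrmin :: "nat list \<Rightarrow> nat" where
  "lrmin xs = card {i. i < length xs \<and> (\<forall>j<i. xs ! j > xs ! i)}"

definition rlmax :: "nat list \<Rightarrow> nat" where
  "rlmax xs = card {i. i < length xs \<and> (\<forall>j. i < j \<and> j < length xs \<longrightarrow> xs ! j < xs ! i)}"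

definition rlmin :: "nat list \<Rightarrow> nat" where
  "rlmin xs = card {i. i < length xs \<and> (\<forall>j. i < j \<and> j < length xs \<longrightarrow> xs ! j > xs ! i)}"

definition genfun :: "nat list \<Rightarrow> nat list \<Rightarrow> 'a::field \<Rightarrow> 'a \<Rightarrow> 'a \<Rightarrow> 'a \<Rightarrow> 'a \<Rightarrow> 'a \<Rightarrow> 'a fps" where
  "genfun tau rho p q u v s t = Abs_fps (\<lambda>n. \<Sum>pi\<in>avoiders tau rho n.
      p ^ asc pi * q ^ des pi * u ^ lrmax pi * v ^ rlmax pi * s ^ lrmin pi * t ^ rlmin pi)"

end

theory Submission
  imports Defs
begin


abbreviation av :: "nat \<Rightarrow> nat list set" where
  "av n \<equiv> avoiders [2,3,1] [3,1,2] n"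

lemma all3: "(\<forall>a<(3::nat). P a) = (P 0 \<and> P 1 \<and> P 2)"
  unfolding numeral_3_eq_3 by (simp add: less_Suc_eq all_conj_distrib numeral_2_eq_2)

lemma idx3: assumes "length (idx::nat list) = 3" obtains i j k where "idx = [i,j,k]"
  using assms by (metis length_0_conv length_Suc_conv numeral_3_eq_3)

lemma all3S: "(\<forall>a<Suc (Suc (Suc 0)). P a) = (P 0 \<and> P (Suc 0) \<and> P (Suc (Suc 0)))"
  by (simp add: less_Suc_eq all_conj_distrib)

lemma contains3D:
  assumes "contains xs [a1,a2,a3]"
  shows "\<exists>i j k. i<j \<and> j<k \<and> k<length xs \<and>
     (\<forall>x<3. \<forall>y<3. (xs ! ([i,j,k]!x) < xs ! ([i,j,k]!y)) = ([a1,a2,a3] ! x < [a1,a2,a3] ! y))"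
proof -
  obtain idx where l0: "length idx = length [a1,a2,a3]" and s: "sorted_wrt (<) idx"
    and b: "\<forall>i<length idx. idx ! i < length xs"
    and c0: "\<forall>a<length [a1,a2,a3]. \<forall>b<length [a1,a2,a3]. xs ! (idx ! a) < xs ! (idx ! b) \<longleftrightarrow> [a1,a2,a3] ! a < [a1,a2,a3] ! b"
    using assms unfolding contains_def by blast
  have l: "length idx = 3" using l0 by simp
  have e: "idx = [idx!0, idx!1, idx!2]"
    by (rule nth_equalityI) (use l in \<open>auto simp: less_Suc_eq numeral_3_eq_3 numeral_2_eq_2 nth_Cons'\<close>)
  have o1: "idx!0 < idx!1" "idx!1 < idx!2" using s l unfolding sorted_wrt_iff_nth_less by auto
  have o2: "idx!2 < length xs" using b l by auto
  show ?thesis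
    apply (rule exI[of _ "idx!0"], rule exI[of _ "idx!1"], rule exI[of _ "idx!2"])
    using o1 o2 c0 l e by simp
qed

lemma contains3I:
  assumes "i<j" "j<k" "k<length xs"
    "\<forall>x<3. \<forall>y<3. (xs ! ([i,j,k]!x) < xs ! ([i,j,k]!y)) = ([a1,a2,a3] ! x < [a1,a2,a3] ! y)"
  shows "contains xs [a1,a2,a3]"
  unfolding contains_def
  apply (rule exI[of _ "[i,j,k]"])
  using assms by (simp add: all3S numeral_3_eq_3)

lemma c231: "contains xs [2,3,1] \<longleftrightarrow>
   (\<exists>i j k. i<j \<and> j<k \<and> k<length xs \<and> xs!k < xs!i \<and> xs!i < xs!j)"
proof
  assume "contains xs [2,3,1]"
  from contains3D[OF this] obtain i j k where h: "i<j" "j<k" "k<length xs" and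
    c: "\<forall>x<3. \<forall>y<3. (xs ! ([i,j,k]!x) < xs ! ([i,j,k]!y)) = ([2,3,1::nat] ! x < [2,3,1] ! y)"
    by blast
  have "xs!k < xs!i" using c[rule_format, of 2 0] by simp
  moreover have "xs!i < xs!j" using c[rule_format, of 0 1] by simp
  ultimately show "\<exists>i j k. i<j \<and> j<k \<and> k<length xs \<and> xs!k < xs!i \<and> xs!i < xs!j"
    using h by blast
next
  assume "\<exists>i j k. i<j \<and> j<k \<and> k<length xs \<and> xs!k < xs!i \<and> xs!i < xs!j"
  then obtain i j k where h: "i<j" "j<k" "k<length xs" "xs!k < xs!i" "xs!i < xs!j" by blast
  show "contains xs [2,3,1]"
    by (rule contains3I[OF h(1-3)]) (use h in \<open>auto simp: all3S numeral_3_eq_3\<close>)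
qed

lemma c312: "contains xs [3,1,2] \<longleftrightarrow>
   (\<exists>i j k. i<j \<and> j<k \<and> k<length xs \<and> xs!j < xs!k \<and> xs!k < xs!i)"
proof
  assume "contains xs [3,1,2]"
  from contains3D[OF this] obtain i j k where h: "i<j" "j<k" "k<length xs" and
    c: "\<forall>x<3. \<forall>y<3. (xs ! ([i,j,k]!x) < xs ! ([i,j,k]!y)) = ([3,1,2::nat] ! x < [3,1,2] ! y)"
    by blast
  have "xs!j < xs!k" using c[rule_format, of 1 2] by simp
  moreover have "xs!k < xs!i" using c[rule_format, of 2 0] by simp
  ultimately show "\<exists>i j k. i<j \<and> j<k \<and> k<length xs \<and> xs!j < xs!k \<and> xs!k < xs!i"
    using h by blast
next
  assume "\<exists>i j k. i<j \<and> j<k \<and> k<length xs \<and> xs!j < xs!k \<and> xs!k < xs!i"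
  then obtain i j k where h: "i<j" "j<k" "k<length xs" "xs!j < xs!k" "xs!k < xs!i" by blast
  show "contains xs [3,1,2]"
    by (rule contains3I[OF h(1-3)]) (use h in \<open>auto simp: all3S numeral_3_eq_3\<close>)
qed

lemma card_lt_add: "card {i. i < (a::nat) + b \<and> P i} = card {i. i < a \<and> P i} + card {i. i < b \<and> P (a + i)}"
proof -
  have e: "{i. i < a + b \<and> P i} = {i. i < a \<and> P i} \<union> (\<lambda>i. a + i) ` {i. i < b \<and> P (a + i)}"
  proof
    show "{i. i < a + b \<and> P i} \<subseteq> {i. i < a \<and> P i} \<union> (\<lambda>i. a + i) ` {i. i < b \<and> P (a + i)}"
    proof
      fix x assume "x \<in> {i. i < a + b \<and> P i}"
      then have x: "x < a + b" "P x" by auto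
      show "x \<in> {i. i < a \<and> P i} \<union> (\<lambda>i. a + i) ` {i. i < b \<and> P (a + i)}"
      proof (cases "x < a")
        case True then show ?thesis using x by blast
      next
        case False
        then have "x = a + (x - a)" "x - a < b" using x by auto
        then have "x \<in> (\<lambda>i. a + i) ` {i. i < b \<and> P (a + i)}" using x(2)
          by (metis (mono_tags, lifting) image_eqI mem_Collect_eq)
        then show ?thesis by blast
      qed
    qed
  qed auto
  have "card ({i. i < a \<and> P i} \<union> (\<lambda>i. a + i) ` {i. i < b \<and> P (a + i)})
      = card {i. i < a \<and> P i} + card ((\<lambda>i. a + i) ` {i. i < b \<and> P (a + i)})"
    by (rule card_Un_disjoint) auto
  also have "card ((\<lambda>i. a + i) ` {i. i < b \<and> P (a + i)}) = card {i. i < b \<and> P (a + i)}"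
    by (rule card_image) auto
  finally show ?thesis using e by simp
qed

lemma card_lt_Suc: "card {i. i < Suc k \<and> P i} = card {i. i < k \<and> P i} + (if P k then 1 else 0)"
proof -
  have "card {i. i < k + 1 \<and> P i} = card {i. i < k \<and> P i} + card {i. i < 1 \<and> P (k + i)}"
    by (rule card_lt_add)
  moreover have "{i. i < (1::nat) \<and> P (k + i)} = (if P k then {0} else {})" by auto
  ultimately show ?thesis by simp
qed

lemma card_lt_cong: "(\<And>i. i < n \<Longrightarrow> P i = Q i) \<Longrightarrow> card {i. i < (n::nat) \<and> P i} = card {i. i < n \<and> Q i}"
  by (rule arg_cong[where f=card]) auto

lemma card_lt_none: assumes "\<And>i. i < n \<Longrightarrow> \<not> P i" shows "card {i. i < (n::nat) \<and> P i} = 0"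
proof -
  from assms have "{i. i < n \<and> P i} = {}" by auto
  then show ?thesis by (metis card.empty)
qed

lemma card_lt_all: assumes "\<And>i. i < n \<Longrightarrow> P i" shows "card {i. i < (n::nat) \<and> P i} = n"
proof -
  from assms have "{i. i < n \<and> P i} = {..<n}" by auto
  then show ?thesis by (metis card_lessThan)
qed

lemma asc_alt: "asc xs = card {i. i < length xs - 1 \<and> xs!i < xs!Suc i}"
  unfolding asc_def by (rule arg_cong[where f=card]) auto
lemma des_alt: "des xs = card {i. i < length xs - 1 \<and> xs!i > xs!Suc i}"
  unfolding des_def by (rule arg_cong[where f=card]) auto


lemma asc_app:
  assumes sep: "\<forall>x\<in>set xs. \<forall>y\<in>set ys. x < y" and ne: "xs \<noteq> []" "ys \<noteq> []"
  shows "asc (xs @ ys) = asc xs + asc ys + 1"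
proof -
  obtain k where k: "length xs = Suc k" using ne by (cases xs) auto
  obtain l where l: "length ys = Suc l" using ne by (cases ys) auto
  have b: "xs!k < ys!0" using sep k l by (metis lessI nth_mem zero_less_Suc)
  have "asc (xs@ys) = card {i. i < k + (1 + l) \<and> (xs@ys)!i < (xs@ys)!Suc i}"
    unfolding asc_alt using k l by simp
  also have "... = card {i. i < k \<and> (xs@ys)!i < (xs@ys)!Suc i}
     + (card {i. i < 1 \<and> (xs@ys)!(k+i) < (xs@ys)!Suc (k+i)}
     + card {i. i < l \<and> (xs@ys)!(k+(1+i)) < (xs@ys)!Suc (k+(1+i))})"
    by (simp only: card_lt_add)
  also have "card {i. i < k \<and> (xs@ys)!i < (xs@ys)!Suc i} = asc xs"
    unfolding asc_alt k diff_Suc_1 by (rule card_lt_cong) (simp add: nth_append k)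
  also have "card {i. i < 1 \<and> (xs@ys)!(k+i) < (xs@ys)!Suc (k+i)} = 1"
    by (rule card_lt_all) (use b k in \<open>simp add: nth_append\<close>)
  also have "card {i. i < l \<and> (xs@ys)!(k+(1+i)) < (xs@ys)!Suc (k+(1+i))} = asc ys"
    unfolding asc_alt l diff_Suc_1 by (rule card_lt_cong) (simp add: nth_append k)
  finally show ?thesis by simp
qed

lemma des_app:
  assumes sep: "\<forall>x\<in>set xs. \<forall>y\<in>set ys. x < y" and ne: "xs \<noteq> []" "ys \<noteq> []"
  shows "des (xs @ ys) = des xs + des ys"
proof -
  obtain k where k: "length xs = Suc k" using ne by (cases xs) auto
  obtain l where l: "length ys = Suc l" using ne by (cases ys) auto
  have b: "xs!k < ys!0" using sep k l by (metis lessI nth_mem zero_less_Suc)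
  have "des (xs@ys) = card {i. i < k + (1 + l) \<and> (xs@ys)!i > (xs@ys)!Suc i}"
    unfolding des_alt using k l by simp
  also have "... = card {i. i < k \<and> (xs@ys)!i > (xs@ys)!Suc i}
     + (card {i. i < 1 \<and> (xs@ys)!(k+i) > (xs@ys)!Suc (k+i)}
     + card {i. i < l \<and> (xs@ys)!(k+(1+i)) > (xs@ys)!Suc (k+(1+i))})"
    by (simp only: card_lt_add)
  also have "card {i. i < k \<and> (xs@ys)!i > (xs@ys)!Suc i} = des xs"
    unfolding des_alt k diff_Suc_1 by (rule card_lt_cong) (simp add: nth_append k)
  also have "card {i. i < 1 \<and> (xs@ys)!(k+i) > (xs@ys)!Suc (k+i)} = 0"
    by (rule card_lt_none) (use b k in \<open>simp add: nth_append\<close>)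
  also have "card {i. i < l \<and> (xs@ys)!(k+(1+i)) > (xs@ys)!Suc (k+(1+i))} = des ys"
    unfolding des_alt l diff_Suc_1 by (rule card_lt_cong) (simp add: nth_append k)
  finally show ?thesis by simp
qed

lemma lrmax_app:
  assumes sep: "\<forall>x\<in>set xs. \<forall>y\<in>set ys. x < y"
  shows "lrmax (xs @ ys) = lrmax xs + lrmax ys"
proof -
  have "lrmax (xs@ys) = card {i. i < length xs + length ys \<and> (\<forall>j<i. (xs@ys)!j < (xs@ys)!i)}"
    unfolding lrmax_def by simp
  also have "... = card {i. i < length xs \<and> (\<forall>j<i. (xs@ys)!j < (xs@ys)!i)}
     + card {i. i < length ys \<and> (\<forall>j<length xs + i. (xs@ys)!j < (xs@ys)!(length xs + i))}"
    by (rule card_lt_add)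
  also have "card {i. i < length xs \<and> (\<forall>j<i. (xs@ys)!j < (xs@ys)!i)} = lrmax xs"
    unfolding lrmax_def by (rule card_lt_cong) (simp add: nth_append)
  also have "card {i. i < length ys \<and> (\<forall>j<length xs + i. (xs@ys)!j < (xs@ys)!(length xs + i))} = lrmax ys"
    unfolding lrmax_def
  proof (rule card_lt_cong)
    fix i assume i: "i < length ys"
    show "(\<forall>j<length xs + i. (xs@ys)!j < (xs@ys)!(length xs + i)) = (\<forall>j<i. ys!j < ys!i)"
    proof
      assume h: "\<forall>j<length xs + i. (xs@ys)!j < (xs@ys)!(length xs + i)"
      show "\<forall>j<i. ys!j < ys!i"
      proof (intro allI impI)
        fix j assume "j < i"
        then show "ys!j < ys!i" using h[rule_format, of "length xs + j"] by (simp add: nth_append)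
      qed
    next
      assume h: "\<forall>j<i. ys!j < ys!i"
      show "\<forall>j<length xs + i. (xs@ys)!j < (xs@ys)!(length xs + i)"
      proof (intro allI impI)
        fix j assume j: "j < length xs + i"
        show "(xs@ys)!j < (xs@ys)!(length xs + i)"
        proof (cases "j < length xs")
          case True
          then show ?thesis using sep i by (simp add: nth_append)
        next
          case False
          then show ?thesis using h[rule_format, of "j - length xs"] j by (simp add: nth_append)
        qed
      qed
    qed
  qed
  finally show ?thesis .
qed

lemma lrmin_app:
  assumes sep: "\<forall>x\<in>set xs. \<forall>y\<in>set ys. x < y" and ne: "xs \<noteq> []"
  shows "lrmin (xs @ ys) = lrmin xs"
proof -
  have "lrmin (xs@ys) = card {i. i < length xs + length ys \<and> (\<forall>j<i. (xs@ys)!j > (xs@ys)!i)}"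
    unfolding lrmin_def by simp
  also have "... = card {i. i < length xs \<and> (\<forall>j<i. (xs@ys)!j > (xs@ys)!i)}
     + card {i. i < length ys \<and> (\<forall>j<length xs + i. (xs@ys)!j > (xs@ys)!(length xs + i))}"
    by (rule card_lt_add)
  also have "card {i. i < length xs \<and> (\<forall>j<i. (xs@ys)!j > (xs@ys)!i)} = lrmin xs"
    unfolding lrmin_def by (rule card_lt_cong) (simp add: nth_append)
  also have "card {i. i < length ys \<and> (\<forall>j<length xs + i. (xs@ys)!j > (xs@ys)!(length xs + i))} = 0"
  proof (rule card_lt_none)
    fix i assume i: "i < length ys"
    have "(xs@ys)!0 < (xs@ys)!(length xs + i)" using sep i ne by (simp add: nth_append)
    then show "\<not> (\<forall>j<length xs + i. (xs@ys)!j > (xs@ys)!(length xs + i))" using ne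
      by (metis add_gr_0 length_greater_0_conv not_less_iff_gr_or_eq)
  qed
  finally show ?thesis by simp
qed

lemma rlmax_app:
  assumes sep: "\<forall>x\<in>set xs. \<forall>y\<in>set ys. x < y" and ne: "ys \<noteq> []"
  shows "rlmax (xs @ ys) = rlmax ys"
proof -
  have "rlmax (xs@ys) = card {i. i < length xs + length ys \<and> (\<forall>j. i < j \<and> j < length xs + length ys \<longrightarrow> (xs@ys)!j < (xs@ys)!i)}"
    unfolding rlmax_def by simp
  also have "... = card {i. i < length xs \<and> (\<forall>j. i < j \<and> j < length xs + length ys \<longrightarrow> (xs@ys)!j < (xs@ys)!i)}
     + card {i. i < length ys \<and> (\<forall>j. length xs + i < j \<and> j < length xs + length ys \<longrightarrow> (xs@ys)!j < (xs@ys)!(length xs + i))}"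
    by (rule card_lt_add)
  also have "card {i. i < length xs \<and> (\<forall>j. i < j \<and> j < length xs + length ys \<longrightarrow> (xs@ys)!j < (xs@ys)!i)} = 0"
  proof (rule card_lt_none)
    fix i assume i: "i < length xs"
    have "(xs@ys)!i < (xs@ys)!(length xs)" using sep i ne by (simp add: nth_append)
    then show "\<not> (\<forall>j. i < j \<and> j < length xs + length ys \<longrightarrow> (xs@ys)!j < (xs@ys)!i)" using ne i
      by (metis add_less_cancel_left length_greater_0_conv add_0_right not_less_iff_gr_or_eq)
  qed
  also have "card {i. i < length ys \<and> (\<forall>j. length xs + i < j \<and> j < length xs + length ys \<longrightarrow> (xs@ys)!j < (xs@ys)!(length xs + i))} = rlmax ys"
    unfolding rlmax_def
  proof (rule card_lt_cong)
    fix i assume i: "i < length ys"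
    show "(\<forall>j. length xs + i < j \<and> j < length xs + length ys \<longrightarrow> (xs@ys)!j < (xs@ys)!(length xs + i))
      = (\<forall>j. i < j \<and> j < length ys \<longrightarrow> ys!j < ys!i)"
    proof
      assume h: "\<forall>j. length xs + i < j \<and> j < length xs + length ys \<longrightarrow> (xs@ys)!j < (xs@ys)!(length xs + i)"
      show "\<forall>j. i < j \<and> j < length ys \<longrightarrow> ys!j < ys!i"
      proof (intro allI impI)
        fix j assume "i < j \<and> j < length ys"
        then show "ys!j < ys!i" using h[rule_format, of "length xs + j"] by (simp add: nth_append)
      qed
    next
      assume h: "\<forall>j. i < j \<and> j < length ys \<longrightarrow> ys!j < ys!i"
      show "\<forall>j. length xs + i < j \<and> j < length xs + length ys \<longrightarrow> (xs@ys)!j < (xs@ys)!(length xs + i)"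
      proof (intro allI impI)
        fix j assume j: "length xs + i < j \<and> j < length xs + length ys"
        have "i < j - length xs \<and> j - length xs < length ys" using j by linarith
        then show "(xs@ys)!j < (xs@ys)!(length xs + i)"
          using h[rule_format, of "j - length xs"] j by (simp add: nth_append)
      qed
    qed
  qed
  finally show ?thesis by simp
qed

lemma rlmin_app:
  assumes sep: "\<forall>x\<in>set xs. \<forall>y\<in>set ys. x < y"
  shows "rlmin (xs @ ys) = rlmin xs + rlmin ys"
proof -
  have "rlmin (xs@ys) = card {i. i < length xs + length ys \<and> (\<forall>j. i < j \<and> j < length xs + length ys \<longrightarrow> (xs@ys)!j > (xs@ys)!i)}"
    unfolding rlmin_def by simp
  also have "... = card {i. i < length xs \<and> (\<forall>j. i < j \<and> j < length xs + length ys \<longrightarrow> (xs@ys)!j > (xs@ys)!i)}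
     + card {i. i < length ys \<and> (\<forall>j. length xs + i < j \<and> j < length xs + length ys \<longrightarrow> (xs@ys)!j > (xs@ys)!(length xs + i))}"
    by (rule card_lt_add)
  also have "card {i. i < length xs \<and> (\<forall>j. i < j \<and> j < length xs + length ys \<longrightarrow> (xs@ys)!j > (xs@ys)!i)} = rlmin xs"
    unfolding rlmin_def
  proof (rule card_lt_cong)
    fix i assume i: "i < length xs"
    show "(\<forall>j. i < j \<and> j < length xs + length ys \<longrightarrow> (xs@ys)!j > (xs@ys)!i)
      = (\<forall>j. i < j \<and> j < length xs \<longrightarrow> xs!j > xs!i)"
    proof
      assume h: "\<forall>j. i < j \<and> j < length xs + length ys \<longrightarrow> (xs@ys)!j > (xs@ys)!i"
      show "\<forall>j. i < j \<and> j < length xs \<longrightarrow> xs!j > xs!i"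
      proof (intro allI impI)
        fix j assume "i < j \<and> j < length xs"
        then show "xs!j > xs!i" using h[rule_format, of j] i by (simp add: nth_append)
      qed
    next
      assume h: "\<forall>j. i < j \<and> j < length xs \<longrightarrow> xs!j > xs!i"
      show "\<forall>j. i < j \<and> j < length xs + length ys \<longrightarrow> (xs@ys)!j > (xs@ys)!i"
      proof (intro allI impI)
        fix j assume j: "i < j \<and> j < length xs + length ys"
        show "(xs@ys)!j > (xs@ys)!i"
        proof (cases "j < length xs")
          case True then show ?thesis using h j i by (simp add: nth_append)
        next
          case False then show ?thesis using sep j i by (simp add: nth_append)
        qed
      qed
    qed
  qed
  also have "card {i. i < length ys \<and> (\<forall>j. length xs + i < j \<and> j < length xs + length ys \<longrightarrow> (xs@ys)!j > (xs@ys)!(length xs + i))} = rlmin ys"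
    unfolding rlmin_def
  proof (rule card_lt_cong)
    fix i assume i: "i < length ys"
    show "(\<forall>j. length xs + i < j \<and> j < length xs + length ys \<longrightarrow> (xs@ys)!j > (xs@ys)!(length xs + i))
      = (\<forall>j. i < j \<and> j < length ys \<longrightarrow> ys!j > ys!i)"
    proof
      assume h: "\<forall>j. length xs + i < j \<and> j < length xs + length ys \<longrightarrow> (xs@ys)!j > (xs@ys)!(length xs + i)"
      show "\<forall>j. i < j \<and> j < length ys \<longrightarrow> ys!j > ys!i"
      proof (intro allI impI)
        fix j assume "i < j \<and> j < length ys"
        then show "ys!j > ys!i" using h[rule_format, of "length xs + j"] by (simp add: nth_append)
      qed
    next
      assume h: "\<forall>j. i < j \<and> j < length ys \<longrightarrow> ys!j > ys!i"
      show "\<forall>j. length xs + i < j \<and> j < length xs + length ys \<longrightarrow> (xs@ys)!j > (xs@ys)!(length xs + i)"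
      proof (intro allI impI)
        fix j assume j: "length xs + i < j \<and> j < length xs + length ys"
        have "i < j - length xs \<and> j - length xs < length ys" using j by linarith
        then show "(xs@ys)!j > (xs@ys)!(length xs + i)"
          using h[rule_format, of "j - length xs"] j by (simp add: nth_append)
      qed
    qed
  qed
  finally show ?thesis .
qed


definition blk :: "nat \<Rightarrow> nat \<Rightarrow> nat list" where
  "blk m a = map (\<lambda>k. m + a - k) [0..<a]"

lemma length_blk[simp]: "length (blk m a) = a" by (simp add: blk_def)
lemma nth_blk[simp]: "k < a \<Longrightarrow> blk m a ! k = m + a - k" by (simp add: blk_def)

lemma set_blk: "set (blk m a) = {Suc m..m+a}"
proof
  show "set (blk m a) \<subseteq> {Suc m..m+a}" by (auto simp: blk_def)
  show "{Suc m..m+a} \<subseteq> set (blk m a)"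
  proof
    fix x assume x: "x \<in> {Suc m..m+a}"
    then have "m + a - x < a" "blk m a ! (m + a - x) = x" by auto
    then show "x \<in> set (blk m a)" by (metis length_blk nth_mem)
  qed
qed

lemma distinct_blk: "distinct (blk m a)"
  unfolding distinct_conv_nth by auto

lemma blk_ne: "a \<ge> 1 \<Longrightarrow> blk m a \<noteq> []"
  by (metis length_blk list.size(3) not_one_le_zero)

lemma asc_blk: "asc (blk m a) = 0"
  unfolding asc_alt by (rule card_lt_none) simp

lemma des_blk: "des (blk m a) = a - 1"
  unfolding des_alt length_blk by (rule card_lt_all) simp

lemma lrmax_blk: assumes "a \<ge> 1" shows "lrmax (blk m a) = 1"
proof -
  obtain l where l: "a = 1 + l" using assms by (metis le_add_diff_inverse)
  have "lrmax (blk m a) = card {i. i < 1 + l \<and> (\<forall>j<i. blk m a ! j < blk m a ! i)}"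
    unfolding lrmax_def l by simp
  also have "... = card {i. i < 1 \<and> (\<forall>j<i. blk m a ! j < blk m a ! i)}
      + card {i. i < l \<and> (\<forall>j<1+i. blk m a ! j < blk m a ! (1+i))}"
    by (rule card_lt_add)
  also have "card {i. i < 1 \<and> (\<forall>j<i. blk m a ! j < blk m a ! i)} = 1"
    by (rule card_lt_all) simp
  also have "card {i. i < l \<and> (\<forall>j<1+i. blk m a ! j < blk m a ! (1+i))} = 0"
  proof (rule card_lt_none)
    fix i assume "i < l"
    then have "blk m a ! 0 > blk m a ! (1+i)" using l by simp
    then show "\<not> (\<forall>j<1+i. blk m a ! j < blk m a ! (1+i))" by auto
  qed
  finally show ?thesis by simp
qed

lemma lrmin_blk: "lrmin (blk m a) = a"
  unfolding lrmin_def length_blk by (rule card_lt_all) auto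

lemma rlmax_blk: "rlmax (blk m a) = a"
  unfolding rlmax_def length_blk by (rule card_lt_all) auto

lemma rlmin_blk: assumes "a \<ge> 1" shows "rlmin (blk m a) = 1"
proof -
  obtain l where l: "a = Suc l" using assms by (cases a) auto
  have "rlmin (blk m a) = card {i. i < Suc l \<and> (\<forall>j. i < j \<and> j < a \<longrightarrow> blk m a ! j > blk m a ! i)}"
    unfolding rlmin_def l by simp
  also have "... = card {i. i < l \<and> (\<forall>j. i < j \<and> j < a \<longrightarrow> blk m a ! j > blk m a ! i)}
     + (if (\<forall>j. l < j \<and> j < a \<longrightarrow> blk m a ! j > blk m a ! l) then 1 else 0)"
    by (rule card_lt_Suc)
  also have "card {i. i < l \<and> (\<forall>j. i < j \<and> j < a \<longrightarrow> blk m a ! j > blk m a ! i)} = 0"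
  proof (rule card_lt_none)
    fix i assume "i < l"
    then have "Suc i < a" "blk m a ! Suc i < blk m a ! i" using l by auto
    then show "\<not> (\<forall>j. i < j \<and> j < a \<longrightarrow> blk m a ! j > blk m a ! i)" by force
  qed
  finally show ?thesis using l by simp
qed


lemma av_iff: "xs \<in> av n \<longleftrightarrow> (length xs = n \<and> distinct xs \<and> set xs = {1..n}) \<and>
   \<not> (\<exists>i j k. i<j \<and> j<k \<and> k<length xs \<and> xs!k < xs!i \<and> xs!i < xs!j) \<and>
   \<not> (\<exists>i j k. i<j \<and> j<k \<and> k<length xs \<and> xs!j < xs!k \<and> xs!k < xs!i)"
  unfolding avoiders_def avoids_def c231 c312 perms_def by blast

lemma av_app:
  assumes xs: "xs \<in> av m" and a: "1 \<le> a"
  shows "xs @ blk m a \<in> av (m + a)"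
proof -
  let ?L = "xs @ blk m a"
  have l: "length xs = m" and d: "distinct xs" and s: "set xs = {1..m}"
    and n1: "\<not> (\<exists>i j k. i<j \<and> j<k \<and> k<length xs \<and> xs!k < xs!i \<and> xs!i < xs!j)"
    and n2: "\<not> (\<exists>i j k. i<j \<and> j<k \<and> k<length xs \<and> xs!j < xs!k \<and> xs!k < xs!i)"
    using xs unfolding av_iff by blast+
  have V1: "?L!i = xs!i \<and> xs!i \<le> m" if "i < m" for i
  proof -
    have "xs!i \<in> {1..m}" using that l s nth_mem by metis
    then show ?thesis using that l by (simp add: nth_append)
  qed
  have V2: "?L!i = m + a - (i - m) \<and> ?L!i > m" if "m \<le> i" "i < m + a" for i
    using that l by (auto simp: nth_append)
  have len: "length ?L = m + a" using l by simp
  have dist: "distinct ?L" using d distinct_blk s set_blk by auto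
  have st: "set ?L = {1..m+a}" using s set_blk by auto
  have c1: "\<not> (\<exists>i j k. i<j \<and> j<k \<and> k<length ?L \<and> ?L!k < ?L!i \<and> ?L!i < ?L!j)"
  proof
    assume "\<exists>i j k. i<j \<and> j<k \<and> k<length ?L \<and> ?L!k < ?L!i \<and> ?L!i < ?L!j"
    then obtain i j k where h: "i<j" "j<k" "k<m+a" "?L!k < ?L!i" "?L!i < ?L!j" using len by auto
    show False
    proof (cases "k < m")
      case True
      then have "xs!k < xs!i" "xs!i < xs!j" using V1[of i] V1[of j] V1[of k] h by auto
      then show False using n1 h True l by blast
    next
      case False
      then have "?L!k > m" using V2 h by auto
      then have "\<not> i < m" using V1[of i] h by auto
      then show False using V2[of i] V2[of j] h by auto
    qed
  qed
  have c2: "\<not> (\<exists>i j k. i<j \<and> j<k \<and> k<length ?L \<and> ?L!j < ?L!k \<and> ?L!k < ?L!i)"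
  proof
    assume "\<exists>i j k. i<j \<and> j<k \<and> k<length ?L \<and> ?L!j < ?L!k \<and> ?L!k < ?L!i"
    then obtain i j k where h: "i<j" "j<k" "k<m+a" "?L!j < ?L!k" "?L!k < ?L!i" using len by auto
    show False
    proof (cases "k < m")
      case True
      then have "xs!j < xs!k" "xs!k < xs!i" using V1[of i] V1[of j] V1[of k] h by auto
      then show False using n2 h True l by blast
    next
      case False
      then have "?L!k > m" using V2 h by auto
      show False
      proof (cases "i < m")
        case True
        then show False using V1[of i] \<open>?L!k > m\<close> h by auto
      next
        case False
        then show False using V2[of j] V2[of k] h by auto
      qed
    qed
  qed
  show ?thesis unfolding av_iff using len dist st c1 c2 by blast
qed


lemma av_split:
  assumes p: "p \<in> av n" and n: "1 \<le> n"
  shows "\<exists>a xs. a \<in> {1..n} \<and> xs \<in> av (n-a) \<and> p = xs @ blk (n-a) a"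
proof -
  have l: "length p = n" and d: "distinct p" and s: "set p = {1..n}"
    and n1: "\<not> (\<exists>i j k. i<j \<and> j<k \<and> k<length p \<and> p!k < p!i \<and> p!i < p!j)"
    and n2: "\<not> (\<exists>i j k. i<j \<and> j<k \<and> k<length p \<and> p!j < p!k \<and> p!k < p!i)"
    using p unfolding av_iff by blast+
  have "n \<in> set p" using s n by auto
  then obtain i where i: "i < n" "p!i = n" using l by (metis in_set_conv_nth)
  have rng: "p!k \<in> {1..n}" if "k < n" for k using that l s nth_mem by metis
  have ltn: "p!k < n" if "k < n" "k \<noteq> i" for k
  proof -
    have "p!k \<noteq> p!i" using nth_eq_iff_index_eq[OF d, of k i] that i l by auto
    then show ?thesis using rng[OF that(1)] i by auto
  qed
  have D: "p!k < p!j" if "i \<le> j" "j < k" "k < n" for j k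
  proof (cases "j = i")
    case True then show ?thesis using ltn[of k] that i by auto
  next
    case False
    have "p!j \<noteq> p!k" using d that l by (simp add: nth_eq_iff_index_eq)
    moreover have "\<not> p!j < p!k"
    proof
      assume "p!j < p!k"
      moreover have "p!k < p!i" using ltn[of k] that i by auto
      ultimately show False using n2 that False l
        by (metis le_neq_implies_less)
    qed
    ultimately show ?thesis by auto
  qed
  have Sep: "p!j < p!k" if "j < i" "i \<le> k" "k < n" for j k
  proof (cases "k = i")
    case True then show ?thesis using ltn[of j] that i by auto
  next
    case False
    have "p!j \<noteq> p!k" using d that l by (simp add: nth_eq_iff_index_eq)
    moreover have "\<not> p!k < p!j"
    proof
      assume "p!k < p!j"
      moreover have "p!j < p!i" using ltn[of j] that i by auto
      moreover have "i < k" using that False by auto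
      ultimately show False using n1 that l by blast
    qed
    ultimately show ?thesis by auto
  qed
  define xs where "xs = take i p"
  define ys where "ys = drop i p"
  have pe: "p = xs @ ys" unfolding xs_def ys_def by simp
  have lxs: "length xs = i" using i l unfolding xs_def by simp
  have lys: "length ys = n - i" using i l unfolding ys_def by simp
  have dxs: "distinct xs" using d unfolding xs_def by simp
  have sub: "set xs \<subseteq> {1..i}"
  proof
    fix x assume "x \<in> set xs"
    then obtain j where j: "j < i" "x = p!j" using lxs unfolding xs_def
      by (metis in_set_conv_nth nth_take)
    have "(\<lambda>k. p!k) ` {i..<n} \<subseteq> {p!j<..n}" using Sep j rng by auto
    moreover have "inj_on (\<lambda>k. p!k) {i..<n}" using d l by (auto simp: inj_on_def nth_eq_iff_index_eq)
    ultimately have "card {i..<n} \<le> card {p!j<..n}"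
      by (metis card_image card_mono finite_greaterThanAtMost)
    then have "n - i \<le> n - p!j" by simp
    then show "x \<in> {1..i}" using j rng[of j] i by auto
  qed
  have sxs: "set xs = {1..i}"
    by (rule card_subset_eq) (use sub dxs lxs distinct_card in auto)
  have sys: "set ys = {Suc i..n}"
  proof -
    have "set p = set xs \<union> set ys" using pe by simp
    moreover have "set xs \<inter> set ys = {}" using d pe by auto
    ultimately have "set ys = set p - set xs" by blast
    also have "... = {1..n} - {1..i}" using s sxs by simp
    also have "... = {Suc i..n}" by auto
    finally show ?thesis .
  qed
  have ys_blk: "ys = blk i (n - i)"
  proof -
    have "sorted_wrt (\<lambda>x y. y < x) ys" unfolding sorted_wrt_iff_nth_less
    proof (intro allI impI)
      fix a b assume "a < b" "b < length ys"
      then show "ys!b < ys!a" using D[of "i+a" "i+b"] lys i l unfolding ys_def by simp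
    qed
    then have s1: "sorted_wrt (<) (rev ys)" by (simp add: sorted_wrt_rev)
    have "sorted_wrt (\<lambda>x y. y < x) (blk i (n-i))" unfolding sorted_wrt_iff_nth_less
      by auto
    then have s2: "sorted_wrt (<) (rev (blk i (n-i)))" by (simp add: sorted_wrt_rev)
    have "set (rev ys) = set (rev (blk i (n-i)))" using sys set_blk i by simp
    then have "rev ys = rev (blk i (n-i))"
      using s1 s2 by (metis sorted_distinct_set_unique strict_sorted_iff)
    then show ?thesis by simp
  qed
  have xav: "xs \<in> av i"
  proof -
    have c1: "\<not> (\<exists>a b c. a<b \<and> b<c \<and> c<length xs \<and> xs!c < xs!a \<and> xs!a < xs!b)"
      using n1 lxs l i unfolding xs_def by auto
    have c2: "\<not> (\<exists>a b c. a<b \<and> b<c \<and> c<length xs \<and> xs!b < xs!c \<and> xs!c < xs!a)"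
      using n2 lxs l i unfolding xs_def by auto
    show ?thesis unfolding av_iff using c1 c2 lxs dxs sxs by blast
  qed
  show ?thesis
    apply (rule exI[of _ "n - i"], rule exI[of _ xs])
    using xav pe ys_blk i by auto
qed

lemma blk_neq:
  assumes "length xs = m" "set xs = {1..m}" "m' < m" "m + a = n" "m' + a' = n" "1 \<le> a" "1 \<le> a'"
  shows "xs @ blk m a \<noteq> ys @ blk m' a' \<or> length ys \<noteq> m'"
proof (rule ccontr)
  assume "\<not> ?thesis"
  then have eq: "xs @ blk m a = ys @ blk m' a'" and ly: "length ys = m'" by auto
  have "(xs @ blk m a)!m' = xs!m'" using assms by (simp add: nth_append)
  moreover have "xs!m' \<in> {1..m}" using assms nth_mem by metis
  moreover have "(ys @ blk m' a')!m' = n" using ly assms by (simp add: nth_append)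
  ultimately show False using eq assms by auto
qed

lemma av_inj:
  assumes "xs \<in> av m" "ys \<in> av m'" "m + a = n" "m' + a' = n" "1 \<le> a" "1 \<le> a'"
    "xs @ blk m a = ys @ blk m' a'"
  shows "a = a' \<and> xs = ys"
proof -
  have lx: "length xs = m" "set xs = {1..m}" using assms(1) unfolding av_iff by blast+
  have ly: "length ys = m'" "set ys = {1..m'}" using assms(2) unfolding av_iff by blast+
  have "\<not> m' < m" using blk_neq[OF lx _ assms(3,4,5,6)] ly assms(7) by blast
  moreover have "\<not> m < m'" using blk_neq[OF ly _ assms(4,3,6,5)] lx assms(7) by metis
  ultimately have "m = m'" by simp
  then have "a = a'" using assms by simp
  then show ?thesis using assms \<open>m = m'\<close> by simp
qed

lemma finite_av: "finite (av m)"
proof -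
  have "av m \<subseteq> {xs. set xs \<subseteq> {1..m} \<and> length xs = m}"
  proof
    fix xs assume "xs \<in> av m"
    then have "length xs = m" "set xs = {1..m}" unfolding av_iff by blast+
    then show "xs \<in> {xs. set xs \<subseteq> {1..m} \<and> length xs = m}" by auto
  qed
  then show ?thesis by (rule finite_subset) (rule finite_lists_length_eq, simp)
qed

lemma sum_av:
  assumes n: "1 \<le> n"
  shows "(\<Sum>p\<in>av n. f p) = (\<Sum>a=1..n. \<Sum>xs\<in>av (n-a). f (xs @ blk (n-a) a))"
proof -
  let ?g = "\<lambda>(a, xs). xs @ blk (n-a) a"
  have bij: "bij_betw ?g (SIGMA a:{1..n}. av (n-a)) (av n)"
    unfolding bij_betw_def
  proof
    show "inj_on ?g (SIGMA a:{1..n}. av (n-a))"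
    proof (rule inj_onI, clarify)
      fix a xs a' ys
      assume h: "a \<in> {1..n}" "xs \<in> av (n-a)" "a' \<in> {1..n}" "ys \<in> av (n-a')"
        "xs @ blk (n-a) a = ys @ blk (n-a') a'"
      show "a = a' \<and> xs = ys" by (rule av_inj[OF h(2,4) _ _ _ _ h(5)]) (use h in auto)
    qed
    show "?g ` (SIGMA a:{1..n}. av (n-a)) = av n"
    proof
      show "?g ` (SIGMA a:{1..n}. av (n-a)) \<subseteq> av n"
      proof clarify
        fix a xs assume "a \<in> {1..n}" "xs \<in> av (n-a)"
        then show "xs @ blk (n-a) a \<in> av n" using av_app[of xs "n-a" a] by auto
      qed
      show "av n \<subseteq> ?g ` (SIGMA a:{1..n}. av (n-a))"
      proof
        fix p assume "p \<in> av n"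
        then obtain a xs where "a \<in> {1..n}" "xs \<in> av (n-a)" "p = xs @ blk (n-a) a"
          using av_split n by blast
        then show "p \<in> ?g ` (SIGMA a:{1..n}. av (n-a))" by force
      qed
    qed
  qed
  have fin: "\<forall>a\<in>{1..n}. finite (av (n-a))" using finite_av by blast
  have "(\<Sum>p\<in>av n. f p) = (\<Sum>z\<in>(SIGMA a:{1..n}. av (n-a)). f (?g z))"
    using sum.reindex_bij_betw[OF bij, of f] by simp
  also have "... = (\<Sum>(a,xs)\<in>(SIGMA a:{1..n}. av (n-a)). f (xs @ blk (n-a) a))"
    by (rule sum.cong) auto
  also have "... = (\<Sum>a=1..n. \<Sum>xs\<in>av (n-a). f (xs @ blk (n-a) a))"
    by (rule sum.Sigma[OF finite_atLeastAtMost fin, symmetric])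
  finally show ?thesis .
qed


definition W :: "'a::field \<Rightarrow> 'a \<Rightarrow> 'a \<Rightarrow> 'a \<Rightarrow> 'a \<Rightarrow> 'a \<Rightarrow> nat list \<Rightarrow> 'a" where
  "W p q u v s t xs = p ^ asc xs * q ^ des xs * u ^ lrmax xs * v ^ rlmax xs * s ^ lrmin xs * t ^ rlmin xs"

lemma W_app:
  assumes xs: "xs \<in> av m" and m: "1 \<le> m" and a: "1 \<le> a"
  shows "W p q u v s t (xs @ blk m a) = W p q u 1 s t xs * (p * q^(a-1) * u * t * v^a)"
proof -
  have l: "length xs = m" and sx: "set xs = {1..m}" using xs unfolding av_iff by blast+
  have sep: "\<forall>x\<in>set xs. \<forall>y\<in>set (blk m a). x < y" using sx set_blk by auto
  have ne: "xs \<noteq> []" using l m by auto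
  have nb: "blk m a \<noteq> []" using blk_ne a by blast
  show ?thesis
    unfolding W_def asc_app[OF sep ne nb] des_app[OF sep ne nb] lrmax_app[OF sep] rlmax_app[OF sep nb]
      lrmin_app[OF sep ne] rlmin_app[OF sep] asc_blk des_blk lrmax_blk[OF a] rlmax_blk rlmin_blk[OF a]
    by (simp add: power_add ac_simps)
qed

lemma W_blk0:
  assumes a: "1 \<le> a"
  shows "W p q u v s t (blk 0 a) = q^(a-1) * u * v^a * s^a * t"
  unfolding W_def asc_blk des_blk lrmax_blk[OF a] rlmax_blk lrmin_blk rlmin_blk[OF a] by simp

lemma av0: "av 0 = {[]}"
proof -
  have "xs \<in> av 0 \<longleftrightarrow> xs = []" for xs unfolding av_iff by auto
  then show ?thesis by auto
qed

lemma W_nil: "W p q u v s t [] = 1"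
  by (simp add: W_def asc_def des_def lrmax_def rlmax_def lrmin_def rlmin_def)

definition cc :: "'a::field \<Rightarrow> 'a \<Rightarrow> 'a \<Rightarrow> 'a \<Rightarrow> 'a \<Rightarrow> 'a \<Rightarrow> nat \<Rightarrow> 'a" where
  "cc p q u v s t n = (\<Sum>xs\<in>av n. W p q u v s t xs)"

lemma cc0: "cc p q u v s t 0 = 1"
  unfolding cc_def av0 by (simp add: W_nil)

lemma cc_rec:
  assumes n: "1 \<le> n"
  shows "cc p q u v s t n = q^(n-1) * u * v^n * s^n * t
     + (\<Sum>a\<in>{1..<n}. cc p q u 1 s t (n-a) * (p * q^(a-1) * u * t * v^a))"
proof -
  have "cc p q u v s t n = (\<Sum>a=1..n. \<Sum>xs\<in>av (n-a). W p q u v s t (xs @ blk (n-a) a))"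
    unfolding cc_def by (rule sum_av[OF n])
  also have "{1..n} = insert n {1..<n}" using n by auto
  also have "(\<Sum>a\<in>insert n {1..<n}. \<Sum>xs\<in>av (n-a). W p q u v s t (xs @ blk (n-a) a))
     = (\<Sum>xs\<in>av 0. W p q u v s t (xs @ blk 0 n))
       + (\<Sum>a\<in>{1..<n}. \<Sum>xs\<in>av (n-a). W p q u v s t (xs @ blk (n-a) a))"
    by (subst sum.insert) auto
  also have "(\<Sum>xs\<in>av 0. W p q u v s t (xs @ blk 0 n)) = q^(n-1) * u * v^n * s^n * t"
    unfolding av0 using W_blk0[OF n] by simp
  also have "(\<Sum>a\<in>{1..<n}. \<Sum>xs\<in>av (n-a). W p q u v s t (xs @ blk (n-a) a))
     = (\<Sum>a\<in>{1..<n}. cc p q u 1 s t (n-a) * (p * q^(a-1) * u * t * v^a))"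
  proof (rule sum.cong[OF refl])
    fix a assume a: "a \<in> {1..<n}"
    have "(\<Sum>xs\<in>av (n-a). W p q u v s t (xs @ blk (n-a) a))
       = (\<Sum>xs\<in>av (n-a). W p q u 1 s t xs * (p * q^(a-1) * u * t * v^a))"
      by (rule sum.cong[OF refl]) (rule W_app, use a in auto)
    also have "... = cc p q u 1 s t (n-a) * (p * q^(a-1) * u * t * v^a)"
      unfolding cc_def by (simp add: sum_distrib_right)
    finally show "(\<Sum>xs\<in>av (n-a). W p q u v s t (xs @ blk (n-a) a)) = cc p q u 1 s t (n-a) * (p * q^(a-1) * u * t * v^a)" .
  qed
  finally show ?thesis .
qed

definition Eser :: "'a::field \<Rightarrow> 'a \<Rightarrow> 'a fps" where
  "Eser q w = Abs_fps (\<lambda>n. if n = 0 then 0 else q^(n-1) * w^n)"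

lemma Eser_eq: "(1 - fps_const q * fps_const w * fps_X) * Eser q w = fps_const w * fps_X"
proof (rule fps_ext)
  fix n
  have e: "(1 - fps_const q * fps_const w * fps_X) * Eser q w = Eser q w - fps_const (q*w) * (fps_X * Eser q w)"
    by (simp add: algebra_simps)
  show "fps_nth ((1 - fps_const q * fps_const w * fps_X) * Eser q w) n = fps_nth (fps_const w * fps_X) n"
    unfolding e
  proof (cases n)
    case 0 then show "fps_nth (Eser q w - fps_const (q*w) * (fps_X * Eser q w)) n = fps_nth (fps_const w * fps_X) n"
      by (simp add: Eser_def)
  next
    case (Suc k)
    then show "fps_nth (Eser q w - fps_const (q*w) * (fps_X * Eser q w)) n = fps_nth (fps_const w * fps_X) n"
      by (cases k) (simp_all add: Eser_def fps_X_mult_nth)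
  qed
qed

lemma sum_drop_ends:
  fixes g :: "nat \<Rightarrow> 'a::comm_monoid_add"
  assumes "g 0 = 0" "g n = 0"
  shows "(\<Sum>i=0..n. g i) = (\<Sum>i\<in>{1..<n}. g i)"
proof -
  have "(\<Sum>i=0..n. g i) = (\<Sum>i\<in>{1..<n}. g i)"
  proof (rule sum.mono_neutral_right)
    show "\<forall>i\<in>{0..n} - {1..<n}. g i = 0"
    proof
      fix i assume "i \<in> {0..n} - {1..<n}"
      then have "i = 0 \<or> i = n" by auto
      then show "g i = 0" using assms by auto
    qed
  qed auto
  then show ?thesis .
qed

definition Fs :: "'a::field \<Rightarrow> 'a \<Rightarrow> 'a \<Rightarrow> 'a \<Rightarrow> 'a \<Rightarrow> 'a \<Rightarrow> 'a fps" where
  "Fs p q u v s t = Abs_fps (cc p q u v s t)"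

lemma Fs_eq:
  "Fs p q u v s t = 1 + fps_const u * fps_const t * Eser q (s*v)
     + fps_const p * fps_const u * fps_const t * Eser q v * (Fs p q u 1 s t - 1)"
proof (rule fps_ext)
  fix n
  have r: "fps_const p * fps_const u * fps_const t * Eser q v * (Fs p q u 1 s t - 1)
     = fps_const (p*u*t) * (Eser q v * (Fs p q u 1 s t - 1))" by (simp add: mult.assoc)
  have r2: "fps_const u * fps_const t * Eser q (s*v) = fps_const (u*t) * Eser q (s*v)" by simp
  show "fps_nth (Fs p q u v s t) n = fps_nth (1 + fps_const u * fps_const t * Eser q (s*v)
     + fps_const p * fps_const u * fps_const t * Eser q v * (Fs p q u 1 s t - 1)) n"
    unfolding r r2
  proof (cases "n = 0")
    case True
    then show "fps_nth (Fs p q u v s t) n = fps_nth (1 + fps_const (u*t) * Eser q (s*v)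
     + fps_const (p*u*t) * (Eser q v * (Fs p q u 1 s t - 1))) n"
      by (simp add: Fs_def cc0 Eser_def fps_mult_nth)
  next
    case False
    then have n: "1 \<le> n" by simp
    have "fps_nth (Eser q v * (Fs p q u 1 s t - 1)) n
        = (\<Sum>i=0..n. fps_nth (Eser q v) i * fps_nth (Fs p q u 1 s t - 1) (n - i))" by (rule fps_mult_nth)
    also have "... = (\<Sum>i\<in>{1..<n}. fps_nth (Eser q v) i * fps_nth (Fs p q u 1 s t - 1) (n - i))"
      by (rule sum_drop_ends) (simp_all add: Eser_def Fs_def cc0)
    also have "... = (\<Sum>i\<in>{1..<n}. q^(i-1) * v^i * cc p q u 1 s t (n-i))"
      by (rule sum.cong[OF refl]) (auto simp: Eser_def Fs_def)
    finally have pr: "fps_nth (Eser q v * (Fs p q u 1 s t - 1)) n = (\<Sum>i\<in>{1..<n}. q^(i-1) * v^i * cc p q u 1 s t (n-i))" .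
    show "fps_nth (Fs p q u v s t) n = fps_nth (1 + fps_const (u*t) * Eser q (s*v)
     + fps_const (p*u*t) * (Eser q v * (Fs p q u 1 s t - 1))) n"
      using False unfolding fps_add_nth fps_mult_left_const_nth pr
      by (simp add: Fs_def cc_rec[OF n] Eser_def sum_distrib_left power_mult_distrib ac_simps)
  qed
qed




lemma abs1: fixes D1 D2 D3 D4 Esv a :: "'a::comm_ring_1"
  assumes "D4*Esv = a" shows "D1*D2*D3*D4*Esv = D1*D2*D3*a"
  using assms by (simp add: mult.assoc)

lemma abs2: fixes D1 D2 D3 D4 Ev H Es b c d :: "'a::comm_ring_1"
  assumes "D3*Ev = b" "D2*H = c*Es" "D1*Es = d" shows "D1*D2*D3*D4*(Ev*H) = D4*b*c*d"
proof -
  have "D1*D2*D3*D4*(Ev*H) = (D3*Ev)*(D2*H)*D4*D1" by (simp only: ac_simps)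
  also have "... = b*(c*Es)*D4*D1" using assms by simp
  also have "... = D4*b*c*(D1*Es)" by (simp only: ac_simps)
  finally show ?thesis using assms by simp
qed

lemma final_alg:
  fixes P Q U V S T X G Fv Es Esv Ev E1 :: "'a::field fps"
  assumes h1: "Fv = 1 + U*T*Esv + P*U*T*Ev*(G-1)"
    and h2: "G = 1 + U*T*Es + P*U*T*E1*(G-1)"
    and e1: "(1 - Q*S*V*X)*Esv = S*V*X" and e2: "(1-Q*S*X)*Es = S*X"
    and e3: "(1-Q*V*X)*Ev = V*X" and e4: "(1-Q*X)*E1 = X"
  shows "Fv * ((1 - Q*S*X) * (1 - Q*X - P*T*U*X) * (1 - Q*V*X) * (1 - Q*S*V*X)) =
   1 - P*T*U*X + S*T*U*V*X + Q^4*S^2*V^2*X^4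
                  + Q^3*S*V*X^3 * (-1 - V + S*(-1 + V*(-1 + (-1 + P)*T*U*X)))
                  - Q*X*(1 + V - P*T*U*V*X + S^2*T*U*V*X*(1 + P*T*U*(-1 + V)*X)
                        + S*(1 + V - P*T*U*X - (-1 + P)*T*U*V*X + P*T^2*U^2*V*X^2
                             + T*U*V^2*X*(1 - P*T*U*X)))
                  + Q^2*X^2*(V + S^2*V*(1 + T*U*(1 - P + V)*X)
                        + S*(1 + V^2*(1 - (-1 + P)*T*U*X) + V*(2 - P*T*U*X)))"
proof -
  have g: "G - 1 = U*T*Es + P*U*T*E1*(G-1)"
  proof -
    have "G - 1 = (1 + U*T*Es + P*U*T*E1*(G-1)) - 1" using h2 by (rule arg_cong[where f="\<lambda>z. z - 1"])
    then show ?thesis by (simp add: add.assoc)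
  qed
  have a: "(1-Q*X-P*T*U*X)*(G-1) = (U*T*(1-Q*X))*Es"
  proof -
    have "(1-Q*X-P*T*U*X)*(G-1) = (1-Q*X)*(G-1) - P*U*T*X*(G-1)" by (simp add: algebra_simps)
    also have "... = (1-Q*X)*(U*T*Es + P*U*T*E1*(G-1)) - P*U*T*X*(G-1)" using g by simp
    also have "... = U*T*(1-Q*X)*Es + P*U*T*((1-Q*X)*E1)*(G-1) - P*U*T*X*(G-1)" by (simp add: algebra_simps)
    also have "... = U*T*(1-Q*X)*Es" using e4 by simp
    finally show ?thesis by simp
  qed
  have b: "(1 - Q*S*X) * (1 - Q*X - P*T*U*X) * (1 - Q*V*X) * (1 - Q*S*V*X) * Esv
     = (1 - Q*S*X) * (1 - Q*X - P*T*U*X) * (1 - Q*V*X) * (S*V*X)"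
    by (rule abs1[OF e1])
  have c: "(1 - Q*S*X) * (1 - Q*X - P*T*U*X) * (1 - Q*V*X) * (1 - Q*S*V*X) * (Ev * (G-1))
    = (1 - Q*S*V*X) * (V*X) * (U*T*(1-Q*X))* (S*X)"
    by (rule abs2[OF e3 a e2])
  have "Fv * ((1 - Q*S*X) * (1 - Q*X - P*T*U*X) * (1 - Q*V*X) * (1 - Q*S*V*X)) =
     (1 - Q*S*X) * (1 - Q*X - P*T*U*X) * (1 - Q*V*X) * (1 - Q*S*V*X)
     + U*T*((1 - Q*S*X) * (1 - Q*X - P*T*U*X) * (1 - Q*V*X) * (1 - Q*S*V*X) * Esv)
     + P*U*T*((1 - Q*S*X) * (1 - Q*X - P*T*U*X) * (1 - Q*V*X) * (1 - Q*S*V*X) * (Ev * (G-1)))"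
    unfolding h1 by (simp only: distrib_left distrib_right mult_1_left mult_1_right ac_simps)
  also have "... = (1 - Q*S*X) * (1 - Q*X - P*T*U*X) * (1 - Q*V*X) * (1 - Q*S*V*X)
     + U*T*((1 - Q*S*X) * (1 - Q*X - P*T*U*X) * (1 - Q*V*X) * (S*V*X))
     + P*U*T*((1 - Q*S*V*X) * (V*X) * (U*T*(1-Q*X))* (S*X))"
    unfolding b c ..
  also have "... = 1 - P*T*U*X + S*T*U*V*X + Q^4*S^2*V^2*X^4
                  + Q^3*S*V*X^3 * (-1 - V + S*(-1 + V*(-1 + (-1 + P)*T*U*X)))
                  - Q*X*(1 + V - P*T*U*V*X + S^2*T*U*V*X*(1 + P*T*U*(-1 + V)*X)
                        + S*(1 + V - P*T*U*X - (-1 + P)*T*U*V*X + P*T^2*U^2*V*X^2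
                             + T*U*V^2*X*(1 - P*T*U*X)))
                  + Q^2*X^2*(V + S^2*V*(1 + T*U*(1 - P + V)*X)
                        + S*(1 + V^2*(1 - (-1 + P)*T*U*X) + V*(2 - P*T*U*X)))"
    by (simp add: algebra_simps power2_eq_square power3_eq_cube power4_eq_xxxx)
  finally show ?thesis .
qed

theorem theorem7:
  fixes p q u v s t :: "'a::field"
  shows "(let X = (fps_X :: 'a fps); P = fps_const p; Q = fps_const q; U = fps_const u;
              V = fps_const v; S = fps_const s; T = fps_const t;
              A = 1 - P*T*U*X + S*T*U*V*X + Q^4*S^2*V^2*X^4
                  + Q^3*S*V*X^3 * (-1 - V + S*(-1 + V*(-1 + (-1 + P)*T*U*X)))
                  - Q*X*(1 + V - P*T*U*V*X + S^2*T*U*V*X*(1 + P*T*U*(-1 + V)*X)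
                        + S*(1 + V - P*T*U*X - (-1 + P)*T*U*V*X + P*T^2*U^2*V*X^2
                             + T*U*V^2*X*(1 - P*T*U*X)))
                  + Q^2*X^2*(V + S^2*V*(1 + T*U*(1 - P + V)*X)
                        + S*(1 + V^2*(1 - (-1 + P)*T*U*X) + V*(2 - P*T*U*X)));
              D = (1 - Q*S*X) * (1 - Q*X - P*T*U*X) * (1 - Q*V*X) * (1 - Q*S*V*X)
          in genfun [2,3,1] [3,1,2] p q u v s t = A / D)"
proof -
  define X where "X = (fps_X :: 'a fps)"
  define P where "P = fps_const p"
  define Q where "Q = fps_const q"
  define U where "U = fps_const u"
  define V where "V = fps_const v"
  define S where "S = fps_const s"
  define T where "T = fps_const t"
  define D where "D = (1 - Q*S*X) * (1 - Q*X - P*T*U*X) * (1 - Q*V*X) * (1 - Q*S*V*X)"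
  have gF: "genfun [2,3,1] [3,1,2] p q u v s t = Fs p q u v s t"
    unfolding genfun_def Fs_def cc_def W_def ..
  have h1: "Fs p q u v s t = 1 + U*T*Eser q (s*v) + P*U*T*Eser q v*(Fs p q u 1 s t - 1)"
    unfolding U_def T_def P_def by (rule Fs_eq)
  have h2: "Fs p q u 1 s t = 1 + U*T*Eser q s + P*U*T*Eser q 1*(Fs p q u 1 s t - 1)"
    unfolding U_def T_def P_def using Fs_eq[of p q u 1 s t] by simp
  have e1: "(1 - Q*S*V*X)*Eser q (s*v) = S*V*X"
  proof -
    have c: "fps_const (s*v) = S * V" unfolding S_def V_def by simp
    show ?thesis using Eser_eq[of q "s*v"] unfolding c Q_def X_def by (simp only: mult.assoc)
  qed
  have e2: "(1 - Q*S*X)*Eser q s = S*X" unfolding Q_def S_def X_def by (rule Eser_eq)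
  have e3: "(1 - Q*V*X)*Eser q v = V*X" unfolding Q_def V_def X_def by (rule Eser_eq)
  have e4: "(1 - Q*X)*Eser q 1 = X" unfolding Q_def X_def using Eser_eq[of q 1] by simp
  have key: "Fs p q u v s t * D = 1 - P*T*U*X + S*T*U*V*X + Q^4*S^2*V^2*X^4
                  + Q^3*S*V*X^3 * (-1 - V + S*(-1 + V*(-1 + (-1 + P)*T*U*X)))
                  - Q*X*(1 + V - P*T*U*V*X + S^2*T*U*V*X*(1 + P*T*U*(-1 + V)*X)
                        + S*(1 + V - P*T*U*X - (-1 + P)*T*U*V*X + P*T^2*U^2*V*X^2
                             + T*U*V^2*X*(1 - P*T*U*X)))
                  + Q^2*X^2*(V + S^2*V*(1 + T*U*(1 - P + V)*X)
                        + S*(1 + V^2*(1 - (-1 + P)*T*U*X) + V*(2 - P*T*U*X)))"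
    unfolding D_def by (rule final_alg[OF h1 h2 e1 e2 e3 e4])
  have D0: "D \<noteq> 0"
  proof
    assume "D = 0"
    then have "fps_nth D 0 = 0" by simp
    moreover have "fps_nth D 0 = 1" unfolding D_def X_def by simp
    ultimately show False by simp
  qed
  have "genfun [2,3,1] [3,1,2] p q u v s t = (Fs p q u v s t * D) / D"
    using D0 gF by simp
  then show ?thesis
    unfolding Let_def key[symmetric] D_def[symmetric] X_def[symmetric] P_def[symmetric]
      Q_def[symmetric] U_def[symmetric] V_def[symmetric] S_def[symmetric] T_def[symmetric] .
qed

end
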